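(* Let $\delta>0$, $n\ge3$, $p\in\mathbb{R}$, let $\varphi_1,\dots,\varphi_{n-1}:[-\delta,\delta]\to\mathbb{R}$ be continuous strictly increasing with $\varphi_j(0)=0$, and $t_1<\dots<t_n$ with $h_j:=t_{j+1}-t_j\le\delta$. Let $H_1,\dots,H_n$ be the associated generalized hat functions, $U_n$ their span, and $s_{i,j}=\langle H_i,H_j\rangle_p$. If $c\in(0,1)$ satisfies $\max_{1\le j\le n-1}\max\{A_{\varphi_j}(h_j),B_{\varphi_j}(h_j)\}\le c$, then $(s_{i,j})$ is row diagonally dominant with factor $c$, and $$\|P^{U_n}\|_{op}\le\max_{t\in[t_1,t_n]}\sum_{j=1}^n|H_j(t)|\cdot\frac{\max_{1\le j\le n-1}\max\{C_{\varphi_j}(h_j),D_{\varphi_j}(h_j)\}}{1-c}.$$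
   Context: $\langle f,g\rangle_p=\int_{t_1}^{t_n}f(t)g(t)e^{pt}\,dt$. $P^{U_n}$ is the $\langle\cdot,\cdot\rangle_p$-orthogonal projection of $C[t_1,t_n]$ onto $U_n$ and $\|P^{U_n}\|_{op}=\sup_{f\neq0}\|P^{U_n}f\|_\infty/\|f\|_\infty$ (sup norm on $[t_1,t_n]$). Row diagonally dominant with factor $c$: $|s_{j-1,j}|+|s_{j,j+1}|\le c\,|s_{j,j}|$ for $j=1,\dots,n$ with $s_{0,1}=s_{n,n+1}=0$. Generalized hat functions: for $2\le j\le n-1$, $H_j(t)=\frac{\varphi_{j-1}(t-t_{j-1})}{\varphi_{j-1}(t_j-t_{j-1})}$ on $[t_{j-1},t_j]$, $H_j(t)=\frac{\varphi_j(t-t_{j+1})}{\varphi_j(t_j-t_{j+1})}$ on $[t_j,t_{j+1}]$, $0$ elsewhere; $H_1=\frac{\varphi_1(t-t_2)}{\varphi_1(t_1-t_2)}$ on $[t_1,t_2]$, $0$ elsewhere; $H_n=\frac{\varphi_{n-1}(t-t_{n-1})}{\varphi_{n-1}(t_n-t_{n-1})}$ on $[t_{n-1},t_n]$, $0$ elsewhere. For $0<h\le\delta$ and $\varphi=\varphi_j$: $A_\varphi(h)=\frac{\varphi(h)}{\varphi(-h)}\frac{\int_0^h\varphi(\tau-h)\varphi(\tau)e^{p\tau}d\tau}{\int_0^h\varphi(\tau)^2e^{p\tau}d\tau}$, $B_\varphi(h)=\frac{\varphi(-h)}{\varphi(h)}\frac{\int_0^h\varphi(\tau-h)\varphi(\tau)e^{p\tau}d\tau}{\int_0^h\varphi(\tau-h)^2e^{p\tau}d\tau}$,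 $C_\varphi(h)=\varphi(h)\frac{\int_0^h\varphi(\tau)e^{p\tau}d\tau}{\int_0^h\varphi(\tau)^2e^{p\tau}d\tau}$, $D_\varphi(h)=\varphi(-h)\frac{\int_0^h\varphi(\tau-h)e^{p\tau}d\tau}{\int_0^h\varphi(\tau-h)^2e^{p\tau}d\tau}$. *)

theory Defs
  imports "HOL-Analysis.Analysis"
begin

definition ipw :: "real \<Rightarrow> real \<Rightarrow> real \<Rightarrow> (real \<Rightarrow> real) \<Rightarrow> (real \<Rightarrow> real) \<Rightarrow> real" where
  "ipw p a b f g = integral {a..b} (\<lambda>s. f s * g s * exp (p * s))"

definition supn :: "real \<Rightarrow> real \<Rightarrow> (real \<Rightarrow> real) \<Rightarrow> real" where
  "supn a b f = Sup ((\<lambda>s. \<bar>f s\<bar>) ` {a..b})"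

text \<open>Generalized hat functions, 1-based indices: nodes t 1 < ... < t n, phi 1 .. phi (n-1).\<close>
definition hat :: "(nat \<Rightarrow> real \<Rightarrow> real) \<Rightarrow> (nat \<Rightarrow> real) \<Rightarrow> nat \<Rightarrow> nat \<Rightarrow> real \<Rightarrow> real" where
  "hat \<phi> t n j s =
    (if j = 1 then
       (if t 1 \<le> s \<and> s \<le> t 2 then \<phi> 1 (s - t 2) / \<phi> 1 (t 1 - t 2) else 0)
     else if j = n then
       (if t (n-1) \<le> s \<and> s \<le> t n then \<phi> (n-1) (s - t (n-1)) / \<phi> (n-1) (t n - t (n-1)) else 0)
     else
       (if t (j-1) \<le> s \<and> s \<le> t j then \<phi> (j-1) (s - t (j-1)) / \<phi> (j-1) (t j - t (j-1))
        else if t j \<le> s \<and> s \<le> t (j+1) then \<phi> j (s - t (j+1)) / \<phi> j (t j - t (j+1))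
        else 0))"

definition Uspan :: "(nat \<Rightarrow> real \<Rightarrow> real) \<Rightarrow> (nat \<Rightarrow> real) \<Rightarrow> nat \<Rightarrow> (real \<Rightarrow> real) set" where
  "Uspan \<phi> t n = {u. \<exists>a::nat \<Rightarrow> real. u = (\<lambda>s. \<Sum>j=1..n. a j * hat \<phi> t n j s)}"

definition proj :: "real \<Rightarrow> (nat \<Rightarrow> real \<Rightarrow> real) \<Rightarrow> (nat \<Rightarrow> real) \<Rightarrow> nat \<Rightarrow> (real \<Rightarrow> real) \<Rightarrow> (real \<Rightarrow> real)" where
  "proj p \<phi> t n f = (THE u. u \<in> Uspan \<phi> t n \<and>
      (\<forall>v \<in> Uspan \<phi> t n. ipw p (t 1) (t n) (\<lambda>s. f s - u s) v = 0))"

definition proj_ratios :: "real \<Rightarrow> (nat \<Rightarrow> real \<Rightarrow> real) \<Rightarrow> (nat \<Rightarrow> real) \<Rightarrow> nat \<Rightarrow> real set" where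
  "proj_ratios p \<phi> t n = {supn (t 1) (t n) (proj p \<phi> t n f) / supn (t 1) (t n) f | f.
      continuous_on {t 1..t n} f \<and> supn (t 1) (t n) f \<noteq> 0}"

definition proj_opnorm :: "real \<Rightarrow> (nat \<Rightarrow> real \<Rightarrow> real) \<Rightarrow> (nat \<Rightarrow> real) \<Rightarrow> nat \<Rightarrow> real" where
  "proj_opnorm p \<phi> t n = Sup (proj_ratios p \<phi> t n)"

text \<open>Row diagonal dominance with factor c (1-based, s_{0,1} = s_{n,n+1} = 0).\<close>
definition row_dd :: "(nat \<Rightarrow> nat \<Rightarrow> real) \<Rightarrow> nat \<Rightarrow> real \<Rightarrow> bool" where
  "row_dd S n c = (\<forall>j\<in>{1..n}.
      (if j = 1 then 0 else \<bar>S (j-1) j\<bar>) + (if j = n then 0 else \<bar>S j (j+1)\<bar>) \<le> c * \<bar>S j j\<bar>)"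

definition Aphi :: "real \<Rightarrow> (real \<Rightarrow> real) \<Rightarrow> real \<Rightarrow> real" where
  "Aphi p \<phi> h = \<phi> h / \<phi> (-h) *
     (integral {0..h} (\<lambda>\<tau>. \<phi> (\<tau> - h) * \<phi> \<tau> * exp (p*\<tau>)) /
      integral {0..h} (\<lambda>\<tau>. \<phi> \<tau> ^ 2 * exp (p*\<tau>)))"

definition Bphi :: "real \<Rightarrow> (real \<Rightarrow> real) \<Rightarrow> real \<Rightarrow> real" where
  "Bphi p \<phi> h = \<phi> (-h) / \<phi> h *
     (integral {0..h} (\<lambda>\<tau>. \<phi> (\<tau> - h) * \<phi> \<tau> * exp (p*\<tau>)) /
      integral {0..h} (\<lambda>\<tau>. \<phi> (\<tau> - h) ^ 2 * exp (p*\<tau>)))"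

definition Cphi :: "real \<Rightarrow> (real \<Rightarrow> real) \<Rightarrow> real \<Rightarrow> real" where
  "Cphi p \<phi> h = \<phi> h *
     (integral {0..h} (\<lambda>\<tau>. \<phi> \<tau> * exp (p*\<tau>)) /
      integral {0..h} (\<lambda>\<tau>. \<phi> \<tau> ^ 2 * exp (p*\<tau>)))"

definition Dphi :: "real \<Rightarrow> (real \<Rightarrow> real) \<Rightarrow> real \<Rightarrow> real" where
  "Dphi p \<phi> h = \<phi> (-h) *
     (integral {0..h} (\<lambda>\<tau>. \<phi> (\<tau> - h) * exp (p*\<tau>)) /
      integral {0..h} (\<lambda>\<tau>. \<phi> (\<tau> - h) ^ 2 * exp (p*\<tau>)))"

end

theory Submission
  imports Defs
begin


lemma dd_bound:
  fixes S :: "nat \<Rightarrow> nat \<Rightarrow> real" and a b :: "nat \<Rightarrow> real"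
  assumes dd: "\<forall>j\<in>{1..n}. 0 < S j j \<and> (\<Sum>i\<in>{1..n}-{j}. \<bar>S i j\<bar>) \<le> c * S j j"
    and c: "0 \<le> c" "c < 1"
    and eq: "\<forall>j\<in>{1..n}. (\<Sum>i=1..n. a i * S i j) = b j"
    and bK: "\<forall>j\<in>{1..n}. \<bar>b j\<bar> \<le> K * S j j"
    and j: "j \<in> {1..n}"
  shows "\<bar>a j\<bar> \<le> K / (1 - c)"
proof -
  have fin: "finite ((\<lambda>i. \<bar>a i\<bar>) ` {1..n})" and ne: "(\<lambda>i. \<bar>a i\<bar>) ` {1..n} \<noteq> {}" using j by auto
  define m where "m = Max ((\<lambda>i. \<bar>a i\<bar>) ` {1..n})"
  obtain j0 where j0: "j0 \<in> {1..n}" "\<bar>a j0\<bar> = m" using Max_in[OF fin ne] m_def by auto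
  have am: "\<And>i. i\<in>{1..n} \<Longrightarrow> \<bar>a i\<bar> \<le> m" unfolding m_def by (rule Max_ge) auto
  have m0: "0 \<le> m" using j0 by auto
  have S0: "0 < S j0 j0" using dd j0 by auto
  have split: "(\<Sum>i=1..n. a i * S i j0) = a j0 * S j0 j0 + (\<Sum>i\<in>{1..n}-{j0}. a i * S i j0)"
    using j0 by (simp add: sum.remove)
  have "\<bar>\<Sum>i\<in>{1..n}-{j0}. a i * S i j0\<bar> \<le> (\<Sum>i\<in>{1..n}-{j0}. m * \<bar>S i j0\<bar>)"
    by (rule order_trans[OF sum_abs]) (intro sum_mono, auto simp: abs_mult intro!: mult_right_mono am)
  also have "\<dots> = m * (\<Sum>i\<in>{1..n}-{j0}. \<bar>S i j0\<bar>)" by (simp add: sum_distrib_left)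
  also have "\<dots> \<le> m * (c * S j0 j0)" using dd j0 m0 by (auto intro!: mult_left_mono)
  finally have r: "\<bar>\<Sum>i\<in>{1..n}-{j0}. a i * S i j0\<bar> \<le> m * (c * S j0 j0)" .
  have "m * S j0 j0 = \<bar>a j0 * S j0 j0\<bar>" using j0 S0 by (simp add: abs_mult)
  also have "a j0 * S j0 j0 = b j0 - (\<Sum>i\<in>{1..n}-{j0}. a i * S i j0)" using eq j0 split by auto
  finally have "m * S j0 j0 \<le> \<bar>b j0\<bar> + m * (c * S j0 j0)" using r by linarith
  also have "\<dots> \<le> K * S j0 j0 + m * (c * S j0 j0)" using bK j0 by auto
  finally have "(m * (1 - c)) * S j0 j0 \<le> K * S j0 j0" by (simp add: algebra_simps)
  hence "m * (1 - c) \<le> K" using S0 by simp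
  hence "m \<le> K / (1 - c)" using c by (simp add: field_simps)
  thus ?thesis using am[OF j] by linarith
qed

lemma dd_exists:
  fixes S :: "nat \<Rightarrow> nat \<Rightarrow> real" and b :: "nat \<Rightarrow> real"
  assumes dd: "\<forall>j\<in>{1..n}. 0 < S j j \<and> (\<Sum>i\<in>{1..n}-{j}. \<bar>S i j\<bar>) \<le> c * S j j"
    and c: "0 \<le> c" "c < 1"
  shows "\<exists>a. \<forall>j\<in>{1..n}. (\<Sum>i=1..n. a i * S i j) = b j"
proof -
  define T where "T = (\<lambda>(a::nat\<Rightarrow>real) j. (b j - (\<Sum>i\<in>{1..n}-{j}. a i * S i j)) / S j j)"
  have contr: "\<bar>T a j - T a' j\<bar> \<le> c * e"
    if h: "\<forall>i\<in>{1..n}. \<bar>a i - a' i\<bar> \<le> e" and j: "j\<in>{1..n}" for a a' e j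
  proof -
    have e0: "0 \<le> e" using h j by force
    have S0: "0 < S j j" using dd j by auto
    have "T a j - T a' j = (\<Sum>i\<in>{1..n}-{j}. (a' i - a i) * S i j) / S j j"
      unfolding T_def by (simp add: diff_divide_distrib[symmetric] sum_subtractf[symmetric] algebra_simps)
    also have "\<bar>\<dots>\<bar> = \<bar>\<Sum>i\<in>{1..n}-{j}. (a' i - a i) * S i j\<bar> / S j j" using S0 by simp
    also have "\<dots> \<le> (\<Sum>i\<in>{1..n}-{j}. e * \<bar>S i j\<bar>) / S j j"
      using S0 h
      by (intro divide_right_mono order_trans[OF sum_abs] sum_mono)
         (auto simp: abs_mult abs_minus_commute intro!: mult_right_mono)
    also have "\<dots> = e * (\<Sum>i\<in>{1..n}-{j}. \<bar>S i j\<bar>) / S j j" by (simp add: sum_distrib_left)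
    also have "\<dots> \<le> e * (c * S j j) / S j j" using dd j e0 S0
      by (intro divide_right_mono mult_left_mono) (auto intro: less_imp_le)
    also have "\<dots> = c * e" using S0 by simp
    finally show ?thesis .
  qed
  define x where "x m = (T ^^ m) (\<lambda>_. 0)" for m
  have xS: "x (Suc m) = T (x m)" for m by (simp add: x_def)
  define K0 where "K0 = Max ((\<lambda>i. \<bar>x 1 i - x 0 i\<bar>) ` {1..n})"
  have K0: "\<forall>i\<in>{1..n}. \<bar>x (Suc m) i - x m i\<bar> \<le> c ^ m * K0" for m
  proof (induction m)
    case 0 then show ?case unfolding K0_def by (auto intro: Max_ge)
  next
    case (Suc m)
    show ?case using contr[OF Suc] by (simp add: xS[of "Suc m"] xS[of m] mult.assoc)
  qed
  define L where "L j = x 0 j + (\<Sum>m. x (Suc m) j - x m j)" for j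
  have conv: "(\<lambda>m. x m j) \<longlonglongrightarrow> L j" if j: "j \<in> {1..n}" for j
  proof -
    have sg: "summable (\<lambda>m. K0 * c ^ m)" using c by (intro summable_mult summable_geometric) auto
    have "summable (\<lambda>m. x (Suc m) j - x m j)"
      by (rule summable_comparison_test[OF _ sg]) (use K0 j in \<open>auto simp: mult.commute\<close>)
    hence "(\<lambda>m. \<Sum>i<m. x (Suc i) j - x i j) \<longlonglongrightarrow> (\<Sum>m. x (Suc m) j - x m j)"
      by (rule summable_LIMSEQ)
    hence "(\<lambda>m. x 0 j + (\<Sum>i<m. x (Suc i) j - x i j)) \<longlonglongrightarrow> L j"
      unfolding L_def by (intro tendsto_intros)
    moreover have "x 0 j + (\<Sum>i<m. x (Suc i) j - x i j) = x m j" for m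
      by (induction m) auto
    ultimately show ?thesis by simp
  qed
  have fx: "T L j = L j" if j: "j \<in> {1..n}" for j
  proof -
    have "(\<lambda>m. x (Suc m) j) \<longlonglongrightarrow> L j" using conv[OF j] by (rule LIMSEQ_Suc)
    moreover have "(\<lambda>m. T (x m) j) \<longlonglongrightarrow> T L j"
      unfolding T_def using conv dd j by (auto intro!: tendsto_intros) (metis atLeastAtMost_iff less_irrefl One_nat_def)
    ultimately show ?thesis by (simp add: xS LIMSEQ_unique)
  qed
  show ?thesis
  proof (intro exI ballI)
    fix j assume j: "j \<in> {1..n}"
    have S0: "0 < S j j" using dd j by auto
    have "(\<Sum>i=1..n. L i * S i j) = L j * S j j + (\<Sum>i\<in>{1..n}-{j}. L i * S i j)"
      using j by (simp add: sum.remove)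
    also have "L j * S j j = b j - (\<Sum>i\<in>{1..n}-{j}. L i * S i j)"
      using fx[OF j] S0 unfolding T_def by (simp add: field_simps)
    finally show "(\<Sum>i=1..n. L i * S i j) = b j" by simp
  qed
qed


locale hs =
  fixes \<delta> p :: real and n :: nat and \<phi> :: "nat \<Rightarrow> real \<Rightarrow> real" and t :: "nat \<Rightarrow> real"
  assumes dpos: "\<delta> > 0" and n3: "n \<ge> 3"
    and phi: "\<forall>j\<in>{1..n-1}. continuous_on {-\<delta>..\<delta>} (\<phi> j) \<and> strict_mono_on {-\<delta>..\<delta>} (\<phi> j) \<and> \<phi> j 0 = 0"
    and tinc: "\<forall>j\<in>{1..n-1}. t j < t (j+1)"
    and hd: "\<forall>j\<in>{1..n-1}. t (j+1) - t j \<le> \<delta>"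
begin

definition F :: "nat \<Rightarrow> nat \<Rightarrow> real \<Rightarrow> real" where
  "F k j \<tau> = (if j = k then \<phi> k (\<tau> - (t (k+1) - t k)) / \<phi> k (-(t (k+1) - t k))
     else if j = k+1 then \<phi> k \<tau> / \<phi> k (t (k+1) - t k) else 0)"

lemma tlt: assumes "1 \<le> i" "i < j" "j \<le> n" shows "t i < t j"
proof -
  have "t i < t (i + Suc d)" if "i + Suc d \<le> n" for d
    using that
  proof (induction d)
    case 0 then show ?case using tinc assms(1) by auto
  next
    case (Suc d)
    have "t (i + Suc d) < t (i + Suc d + 1)" using tinc Suc.prems assms(1) by auto
    then show ?case using Suc by auto
  qed
  from this[of "j - i - 1"] assms show ?thesis by auto
qed

lemma tle: assumes "1 \<le> i" "i \<le> j" "j \<le> n" shows "t i \<le> t j"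
  using tlt[of i j] assms by (cases "i = j") auto

lemma phik: assumes k: "k \<in> {1..n-1}"
  shows "continuous_on {-\<delta>..\<delta>} (\<phi> k)" "\<phi> k 0 = 0"
    "0 < t (k+1) - t k" "t (k+1) - t k \<le> \<delta>"
    "\<phi> k (t (k+1) - t k) > 0" "\<phi> k (-(t (k+1) - t k)) < 0"
    "\<And>\<tau>. 0 \<le> \<tau> \<Longrightarrow> \<tau> \<le> t (k+1) - t k \<Longrightarrow> 0 \<le> \<phi> k \<tau>"
    "\<And>\<tau>. 0 \<le> \<tau> \<Longrightarrow> \<tau> \<le> t (k+1) - t k \<Longrightarrow> \<phi> k (\<tau> - (t (k+1) - t k)) \<le> 0"
proof -
  have sm: "strict_mono_on {-\<delta>..\<delta>} (\<phi> k)" and z: "\<phi> k 0 = 0" using phi k by auto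
  show "continuous_on {-\<delta>..\<delta>} (\<phi> k)" "\<phi> k 0 = 0" using phi k by auto
  show h0: "0 < t (k+1) - t k" "t (k+1) - t k \<le> \<delta>" using tinc hd k by auto
  show "\<phi> k (t (k+1) - t k) > 0" using strict_mono_onD[OF sm, of 0 "t (k+1) - t k"] z h0 dpos by auto
  show "\<phi> k (-(t (k+1) - t k)) < 0" using strict_mono_onD[OF sm, of "-(t (k+1) - t k)" 0] z h0 dpos by auto
  show "0 \<le> \<phi> k \<tau>" if "0 \<le> \<tau>" "\<tau> \<le> t (k+1) - t k" for \<tau>
    using strict_mono_on_leD[OF sm, of 0 \<tau>] z h0 that dpos by auto
  show "\<phi> k (\<tau> - (t (k+1) - t k)) \<le> 0" if "0 \<le> \<tau>" "\<tau> \<le> t (k+1) - t k" for \<tau>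
    using strict_mono_on_leD[OF sm, of "\<tau> - (t (k+1) - t k)" 0] z h0 that dpos by auto
qed

lemma hat_seg:
  assumes k: "k \<in> {1..n-1}" and s: "t k \<le> s" "s \<le> t (k+1)" and j: "j \<in> {1..n}"
  shows "hat \<phi> t n j s = F k j (s - t k)"
proof -
  note pk = phik[OF k]
  have k1: "1 \<le> k" "k + 1 \<le> n" using k n3 by auto
  consider "j = 1" | "j \<noteq> 1" "j = n" | "j \<noteq> 1" "j \<noteq> n" by blast
  then show ?thesis
  proof cases
    case 1
    show ?thesis
    proof (cases "k = 1")
      case True
      then show ?thesis using 1 s unfolding hat_def F_def by (simp add: algebra_simps numeral_2_eq_2)
    next
      case False
      have "t 2 \<le> t k" using tle[of 2 k] k1 False by auto
      hence "t 1 \<le> s \<and> s \<le> t 2 \<longrightarrow> s = t 2" using s by auto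
      moreover have "\<phi> 1 0 = 0" using phi n3 by auto
      moreover have "1 \<noteq> k+1" using k1 by auto
      ultimately show ?thesis using 1 False k1 unfolding hat_def F_def by auto
    qed
  next
    case 2
    show ?thesis
    proof (cases "k = n - 1")
      case True
      then have "n = k + 1" using n3 by auto
      then show ?thesis using 2 s True unfolding hat_def F_def by auto
    next
      case False
      have "t (k+1) \<le> t (n-1)" using tle[of "k+1" "n-1"] k1 False by auto
      hence "t (n-1) \<le> s \<and> s \<le> t n \<longrightarrow> s = t (n-1)" using s by auto
      moreover have "\<phi> (n-1) 0 = 0" using phi n3 by auto
      moreover have "n \<noteq> k" "n \<noteq> k + 1" using False k1 by auto
      ultimately show ?thesis using 2 unfolding hat_def F_def by auto
    qed
  next
    case 3
    have j2: "2 \<le> j" "j + 1 \<le> n" using 3 j by auto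
    consider "k = j - 1" | "k = j" | "k + 2 \<le> j" | "j + 1 \<le> k" by linarith
    then show ?thesis
    proof cases
      case a: 1
      have jk: "j = k + 1" using a j2 by auto
      then show ?thesis using 3 s unfolding hat_def F_def by auto
    next
      case a: 2
      have jm: "j-1 \<in> {1..n-1}" "j - 1 + 1 = j" using j2 by auto
      have pj: "\<phi> (j-1) (t j - t (j-1)) \<noteq> 0" using phik(5)[OF jm(1)] jm(2) by auto
      show ?thesis
      proof (cases "t (j-1) \<le> s \<and> s \<le> t j")
        case True
        then have "s = t j" using s a by auto
        then show ?thesis using 3 True a pj pk unfolding hat_def F_def by auto
      next
        case False
        then show ?thesis using 3 s a unfolding hat_def F_def by (auto simp: algebra_simps)
      qed
    next
      case a: 3
      have lt: "t (k+1) \<le> t (j-1)" using tle[of "k+1" "j-1"] a j2 by auto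
      have lt2: "t (j-1) < t j" using tlt[of "j-1" j] j2 by auto
      have z: "\<phi> (j-1) 0 = 0" by (rule phik(2)) (use j2 in auto)
      have F0: "F k j (s - t k) = 0" using a unfolding F_def by auto
      show ?thesis
      proof (cases "t (j-1) \<le> s")
        case True
        then have "s = t (j-1)" using s lt by auto
        then show ?thesis using 3 F0 z lt2 unfolding hat_def by auto
      next
        case False
        then show ?thesis using 3 F0 s lt lt2 unfolding hat_def by auto
      qed
    next
      case a: 4
      have lt: "t (j+1) \<le> t k" using tle[of "j+1" k] a k1 by auto
      have lt2: "t j < t (j+1)" using tlt[of j "j+1"] j2 by auto
      have z: "\<phi> j 0 = 0" by (rule phik(2)) (use j2 in auto)
      have F0: "F k j (s - t k) = 0" using a unfolding F_def by auto
      show ?thesis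
      proof (cases "s \<le> t (j+1)")
        case True
        then have "s = t (j+1)" using s lt by auto
        then show ?thesis using 3 F0 z lt2 unfolding hat_def by auto
      next
        case False
        then show ?thesis using 3 F0 s lt lt2 unfolding hat_def by auto
      qed
    qed
  qed
qed

lemma cont_shift:
  assumes g: "continuous_on {-\<delta>..\<delta>} g" and h: "0 \<le> h" "h \<le> \<delta>"
  shows "continuous_on {0..h} (\<lambda>\<tau>. g (\<tau> - h))" "continuous_on {0..h} g"
proof -
  show "continuous_on {0..h} (\<lambda>\<tau>. g (\<tau> - h))"
    by (rule continuous_on_compose2[OF g]) (use h in \<open>auto intro!: continuous_intros\<close>)
  show "continuous_on {0..h} g"
    by (rule continuous_on_subset[OF g]) (use h in auto)
qed

lemma F_cont: assumes k: "k \<in> {1..n-1}"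
  shows "continuous_on {0..t (k+1) - t k} (F k j)"
proof -
  note pk = phik[OF k]
  have c1: "continuous_on {0..t (k+1) - t k} (\<lambda>\<tau>. \<phi> k (\<tau> - (t (k+1) - t k)))"
   and c2: "continuous_on {0..t (k+1) - t k} (\<phi> k)"
    using cont_shift[OF pk(1), of "t (k+1) - t k"] pk by auto
  consider "j = k" | "j \<noteq> k" "j = k+1" | "j \<noteq> k" "j \<noteq> k+1" by blast
  then show ?thesis
  proof cases
    case 1
    then have "F k j = (\<lambda>\<tau>. \<phi> k (\<tau> - (t (k+1) - t k)) / \<phi> k (-(t (k+1) - t k)))"
      by (simp add: F_def fun_eq_iff)
    then show ?thesis by (simp only:) (rule continuous_on_divide[OF c1 continuous_on_const], use pk in auto)
  next
    case 2
    then have "F k j = (\<lambda>\<tau>. \<phi> k \<tau> / \<phi> k (t (k+1) - t k))"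
      by (simp add: F_def fun_eq_iff)
    then show ?thesis by (simp only:) (rule continuous_on_divide[OF c2 continuous_on_const], use pk in auto)
  next
    case 3
    then have "F k j = (\<lambda>\<tau>. 0)" by (simp add: F_def fun_eq_iff)
    then show ?thesis by auto
  qed
qed

lemma F_nonneg: assumes k: "k \<in> {1..n-1}" and "0 \<le> \<tau>" "\<tau> \<le> t (k+1) - t k"
  shows "0 \<le> F k j \<tau>"
proof -
  note pk = phik[OF k]
  have "0 \<le> \<phi> k (\<tau> - (t (k+1) - t k)) / \<phi> k (-(t (k+1) - t k))"
    using pk(6) pk(8)[OF assms(2,3)] by (simp add: divide_nonpos_neg)
  moreover have "0 \<le> \<phi> k \<tau> / \<phi> k (t (k+1) - t k)"
    using pk(5) pk(7)[OF assms(2,3)] by simp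
  ultimately show ?thesis unfolding F_def by auto
qed

lemma cover: assumes "t 1 \<le> s" "s \<le> t n" shows "\<exists>k\<in>{1..n-1}. t k \<le> s \<and> s \<le> t (k+1)"
proof -
  define K where "K = {k\<in>{1..n-1}. t k \<le> s}"
  have fin: "finite K" and ne: "1 \<in> K" unfolding K_def using assms n3 by auto
  define k where "k = Max K"
  have kK: "k \<in> K" unfolding k_def using fin ne Max_in by blast
  have kmax: "\<And>i. i \<in> K \<Longrightarrow> i \<le> k" unfolding k_def using fin by auto
  show ?thesis
  proof (cases "k = n - 1")
    case True
    then show ?thesis using kK assms n3 unfolding K_def by auto
  next
    case False
    then have "k + 1 \<in> {1..n-1}" using kK unfolding K_def by auto
    with kmax[of "k+1"] have "\<not> t (k+1) \<le> s" unfolding K_def by auto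
    then show ?thesis using kK unfolding K_def by auto
  qed
qed

lemma seg_cont: assumes k: "k \<in> {1..n-1}" and j: "j \<in> {1..n}"
  shows "continuous_on {t k..t (k+1)} (hat \<phi> t n j)"
proof -
  have "continuous_on {t k..t (k+1)} (\<lambda>s. F k j (s - t k))"
    by (rule continuous_on_compose2[OF F_cont[OF k]]) (auto intro!: continuous_intros)
  then show ?thesis
    by (rule continuous_on_cong[THEN iffD1, rotated 2]) (use hat_seg[OF k _ _ j] in auto)
qed

lemma hat_cont: assumes j: "j \<in> {1..n}"
  shows "continuous_on {t 1..t n} (hat \<phi> t n j)"
proof -
  have eq: "{t 1..t n} = (\<Union>k\<in>{1..n-1}. {t k..t (k+1)})"
  proof
    show "{t 1..t n} \<subseteq> (\<Union>k\<in>{1..n-1}. {t k..t (k+1)})" using cover by force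
    show "(\<Union>k\<in>{1..n-1}. {t k..t (k+1)}) \<subseteq> {t 1..t n}"
    proof
      fix s assume "s \<in> (\<Union>k\<in>{1..n-1}. {t k..t (k+1)})"
      then obtain k where k: "k \<in> {1..n-1}" "t k \<le> s" "s \<le> t (k+1)" by auto
      have "t 1 \<le> t k" "t (k+1) \<le> t n" using tle[of 1 k] tle[of "k+1" n] k n3 by auto
      then show "s \<in> {t 1..t n}" using k by auto
    qed
  qed
  show ?thesis unfolding eq
    by (rule continuous_on_closed_Union) (use seg_cont[OF _ j] in auto)
qed

lemma hat_nonneg: assumes j: "j \<in> {1..n}" and s: "t 1 \<le> s" "s \<le> t n"
  shows "0 \<le> hat \<phi> t n j s"
proof -
  obtain k where k: "k\<in>{1..n-1}" "t k \<le> s" "s \<le> t (k+1)" using cover[OF s] by auto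
  show ?thesis using hat_seg[OF k j] F_nonneg[OF k(1), of "s - t k"] k by auto
qed

lemma int_split:
  fixes g :: "real \<Rightarrow> real"
  assumes "\<forall>k\<in>{1..n-1}. (g has_integral I k) {t k..t (k+1)}"
  shows "(g has_integral (\<Sum>k=1..n-1. I k)) {t 1..t n}"
proof -
  have "m + 1 \<le> n \<longrightarrow> (g has_integral (\<Sum>k=1..m. I k)) {t 1..t (m+1)}" for m
  proof (induction m)
    case 0
    then show ?case using has_integral_refl(1)[of g "t 1"] by auto
  next
    case (Suc m)
    show ?case
    proof
      assume m: "Suc m + 1 \<le> n"
      have a: "(g has_integral (\<Sum>k=1..m. I k)) {t 1..t (m+1)}" using Suc m by auto
      have b: "(g has_integral I (Suc m)) {t (m+1)..t (Suc m + 1)}" using assms m by auto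
      have "t 1 \<le> t (m+1)" "t (m+1) \<le> t (Suc m + 1)" using tle[of 1 "m+1"] tle[of "m+1" "Suc m + 1"] m by auto
      from has_integral_combine[OF this a b] show "(g has_integral (\<Sum>k=1..Suc m. I k)) {t 1..t (Suc m+1)}"
        by simp
    qed
  qed
  from this[of "n-1"] n3 show ?thesis by auto
qed

lemma shift_int:
  fixes G :: "real \<Rightarrow> real"
  assumes G: "continuous_on {0..h} G" and h: "0 \<le> h"
  shows "((\<lambda>y. G (y - a) * exp (p*y)) has_integral (exp (p*a) * integral {0..h} (\<lambda>\<tau>. G \<tau> * exp (p*\<tau>)))) {a..a+h}"
proof -
  have "(\<lambda>\<tau>. G \<tau> * exp (p*\<tau>)) integrable_on {0..h}"
    by (rule integrable_continuous_interval) (use G in \<open>auto intro!: continuous_intros\<close>)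
  then have "((\<lambda>\<tau>. exp (p*a) * (G \<tau> * exp (p*\<tau>))) has_integral (exp (p*a) * integral {0..h} (\<lambda>\<tau>. G \<tau> * exp (p*\<tau>)))) {0..h}"
    by (intro has_integral_mult_right) auto
  also have "(\<lambda>\<tau>. exp (p*a) * (G \<tau> * exp (p*\<tau>))) = (\<lambda>y. G (y - a) * exp (p*y)) \<circ> (+) a"
    by (auto simp: fun_eq_iff algebra_simps exp_add[symmetric])
  finally show ?thesis unfolding has_integral_shift_Icc_real by (simp add: add.commute)
qed

definition Tk :: "nat \<Rightarrow> nat \<Rightarrow> nat \<Rightarrow> real" where
  "Tk k i j = exp (p * t k) * integral {0..t (k+1) - t k} (\<lambda>\<tau>. F k i \<tau> * F k j \<tau> * exp (p*\<tau>))"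

definition T1 :: "nat \<Rightarrow> nat \<Rightarrow> real" where
  "T1 k j = exp (p * t k) * integral {0..t (k+1) - t k} (\<lambda>\<tau>. F k j \<tau> * exp (p*\<tau>))"

lemma seg_int:
  assumes k: "k \<in> {1..n-1}" and G: "continuous_on {0..t (k+1) - t k} G"
    and eq: "\<And>y. t k \<le> y \<Longrightarrow> y \<le> t (k+1) \<Longrightarrow> g y = G (y - t k) * exp (p*y)"
  shows "(g has_integral (exp (p * t k) * integral {0..t (k+1) - t k} (\<lambda>\<tau>. G \<tau> * exp (p*\<tau>)))) {t k..t (k+1)}"
proof -
  have h: "0 \<le> t (k+1) - t k" using phik(3)[OF k] by simp
  from shift_int[OF G h, of "t k"]
  have "((\<lambda>y. G (y - t k) * exp (p*y)) has_integral (exp (p * t k) * integral {0..t (k+1) - t k} (\<lambda>\<tau>. G \<tau> * exp (p*\<tau>)))) {t k..t (k+1)}"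
    by simp
  then show ?thesis by (rule has_integral_cong[THEN iffD1, rotated]) (use eq in auto)
qed

lemma sij: assumes i: "i \<in> {1..n}" and j: "j \<in> {1..n}"
  shows "ipw p (t 1) (t n) (hat \<phi> t n i) (hat \<phi> t n j) = (\<Sum>k=1..n-1. Tk k i j)"
proof -
  have "((\<lambda>y. hat \<phi> t n i y * hat \<phi> t n j y * exp (p*y)) has_integral (\<Sum>k=1..n-1. Tk k i j)) {t 1..t n}"
  proof (rule int_split, rule ballI)
    fix k assume k: "k \<in> {1..n-1}"
    have G: "continuous_on {0..t (k+1) - t k} (\<lambda>\<tau>. F k i \<tau> * F k j \<tau>)"
      using F_cont[OF k] by (auto intro!: continuous_intros)
    show "((\<lambda>y. hat \<phi> t n i y * hat \<phi> t n j y * exp (p*y)) has_integral Tk k i j) {t k..t (k+1)}"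
      unfolding Tk_def by (rule seg_int[OF k G]) (simp add: hat_seg[OF k _ _ i] hat_seg[OF k _ _ j])
  qed
  then show ?thesis unfolding ipw_def by (rule integral_unique)
qed

lemma hint: assumes j: "j \<in> {1..n}"
  shows "integral {t 1..t n} (\<lambda>y. hat \<phi> t n j y * exp (p*y)) = (\<Sum>k=1..n-1. T1 k j)"
proof -
  have "((\<lambda>y. hat \<phi> t n j y * exp (p*y)) has_integral (\<Sum>k=1..n-1. T1 k j)) {t 1..t n}"
  proof (rule int_split, rule ballI)
    fix k assume k: "k \<in> {1..n-1}"
    show "((\<lambda>y. hat \<phi> t n j y * exp (p*y)) has_integral T1 k j) {t k..t (k+1)}"
      unfolding T1_def by (rule seg_int[OF k F_cont[OF k]]) (simp add: hat_seg[OF k _ _ j])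
  qed
  then show ?thesis by (rule integral_unique)
qed

lemma Fvals: assumes k: "k \<in> {1..n-1}"
  shows "F k k \<tau> = \<phi> k (\<tau> - (t (k+1) - t k)) / \<phi> k (-(t (k+1) - t k))"
    "F k (Suc k) \<tau> = \<phi> k \<tau> / \<phi> k (t (k+1) - t k)"
    "j \<noteq> k \<Longrightarrow> j \<noteq> Suc k \<Longrightarrow> F k j \<tau> = 0"
  unfolding F_def by auto

lemma intpos:
  fixes g :: "real \<Rightarrow> real"
  assumes g: "continuous_on {0..h} g" and nn: "\<And>x. x \<in> {0..h} \<Longrightarrow> 0 \<le> g x"
    and x0: "x0 \<in> {0..h}" "g x0 > 0" and h: "0 < h"
  shows "integral {0..h} g > 0"
proof -
  have int: "g integrable_on {0..h}" using g by (rule integrable_continuous_interval)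
  have ge: "integral {0..h} g \<ge> 0" using integral_nonneg[OF int] nn by auto
  show ?thesis
  proof (rule ccontr)
    assume "\<not> ?thesis"
    then have "integral {0..h} g = 0" using ge by auto
    then have "(g has_integral 0) (cbox 0 h)" using int by (metis has_integral_integral interval_cbox)
    from has_integral_0_cbox_imp_0[OF _ _ this] g nn x0 h
    have "g x0 = 0" by (auto simp: box_real)
    then show False using x0 by auto
  qed
qed

lemma segvals:
  assumes k: "k \<in> {1..n-1}"
  defines "h \<equiv> t (k+1) - t k" and "E \<equiv> exp (p * t k)"
  defines "a \<equiv> \<phi> k (-h)" and "b \<equiv> \<phi> k h"
  defines "X \<equiv> integral {0..h} (\<lambda>\<tau>. \<phi> k (\<tau> - h) * \<phi> k \<tau> * exp (p*\<tau>))"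
  defines "P \<equiv> integral {0..h} (\<lambda>\<tau>. \<phi> k \<tau> ^ 2 * exp (p*\<tau>))"
  defines "Q \<equiv> integral {0..h} (\<lambda>\<tau>. \<phi> k (\<tau> - h) ^ 2 * exp (p*\<tau>))"
  defines "U \<equiv> integral {0..h} (\<lambda>\<tau>. \<phi> k \<tau> * exp (p*\<tau>))"
  defines "V \<equiv> integral {0..h} (\<lambda>\<tau>. \<phi> k (\<tau> - h) * exp (p*\<tau>))"
  shows "Tk k k k = E * (Q / a^2)" "Tk k (k+1) (k+1) = E * (P / b^2)"
    "Tk k k (k+1) = E * (X / (a*b))" "Tk k (k+1) k = E * (X / (a*b))"
    "T1 k k = E * (V / a)" "T1 k (k+1) = E * (U / b)"
    "i \<noteq> k \<Longrightarrow> i \<noteq> k+1 \<Longrightarrow> Tk k i j = 0"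
    "i \<noteq> k \<Longrightarrow> i \<noteq> k+1 \<Longrightarrow> Tk k j i = 0"
    "i \<noteq> k \<Longrightarrow> i \<noteq> k+1 \<Longrightarrow> T1 k i = 0"
    "0 < P" "0 < Q" "X \<le> 0" "a < 0" "0 < b" "0 < E"
    "0 \<le> Tk k j j"
proof -
  note pk = phik[OF k, folded h_def]
  note Fv = Fvals[OF k, folded h_def]
  have hpos: "0 < h" using pk by simp
  have a0: "a < 0" and b0: "0 < b" using pk unfolding a_def b_def by auto
  show "a < 0" "0 < b" "0 < E" using a0 b0 unfolding E_def by auto
  have ic: "integral {0..h} (\<lambda>x. (c::real) * f x) = c * integral {0..h} f" for c f
    using integral_cmul[of "{0..h}" c f] by simp
  have c1: "continuous_on {0..h} (\<lambda>\<tau>. \<phi> k (\<tau> - h))" and c2: "continuous_on {0..h} (\<phi> k)"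
    using cont_shift[OF pk(1), of h] pk by auto
  show "Tk k k k = E * (Q / a^2)"
  proof -
    have "integral {0..h} (\<lambda>\<tau>. F k k \<tau> * F k k \<tau> * exp (p*\<tau>)) = integral {0..h} (\<lambda>\<tau>. (1/a^2) * (\<phi> k (\<tau> - h) ^ 2 * exp (p*\<tau>)))"
      by (rule integral_cong) (simp add: Fv a_def power2_eq_square)
    then show ?thesis unfolding Tk_def h_def[symmetric] E_def[symmetric] Q_def ic by simp
  qed
  show "Tk k (k+1) (k+1) = E * (P / b^2)"
  proof -
    have "integral {0..h} (\<lambda>\<tau>. F k (k+1) \<tau> * F k (k+1) \<tau> * exp (p*\<tau>)) = integral {0..h} (\<lambda>\<tau>. (1/b^2) * (\<phi> k \<tau> ^ 2 * exp (p*\<tau>)))"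
      by (rule integral_cong) (simp add: Fv b_def power2_eq_square)
    then show ?thesis unfolding Tk_def h_def[symmetric] E_def[symmetric] P_def ic by simp
  qed
  show "Tk k k (k+1) = E * (X / (a*b))"
  proof -
    have "integral {0..h} (\<lambda>\<tau>. F k k \<tau> * F k (k+1) \<tau> * exp (p*\<tau>)) = integral {0..h} (\<lambda>\<tau>. (1/(a*b)) * (\<phi> k (\<tau> - h) * \<phi> k \<tau> * exp (p*\<tau>)))"
      by (rule integral_cong) (simp add: Fv a_def b_def)
    then show ?thesis unfolding Tk_def h_def[symmetric] E_def[symmetric] X_def ic by simp
  qed
  show "Tk k (k+1) k = E * (X / (a*b))"
  proof -
    have "integral {0..h} (\<lambda>\<tau>. F k (k+1) \<tau> * F k k \<tau> * exp (p*\<tau>)) = integral {0..h} (\<lambda>\<tau>. (1/(a*b)) * (\<phi> k (\<tau> - h) * \<phi> k \<tau> * exp (p*\<tau>)))"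
      by (rule integral_cong) (simp add: Fv a_def b_def mult_ac)
    then show ?thesis unfolding Tk_def h_def[symmetric] E_def[symmetric] X_def ic by simp
  qed
  show "T1 k k = E * (V / a)"
  proof -
    have "integral {0..h} (\<lambda>\<tau>. F k k \<tau> * exp (p*\<tau>)) = integral {0..h} (\<lambda>\<tau>. (1/a) * (\<phi> k (\<tau> - h) * exp (p*\<tau>)))"
      by (rule integral_cong) (simp add: Fv a_def)
    then show ?thesis unfolding T1_def h_def[symmetric] E_def[symmetric] V_def ic by simp
  qed
  show "T1 k (k+1) = E * (U / b)"
  proof -
    have "integral {0..h} (\<lambda>\<tau>. F k (k+1) \<tau> * exp (p*\<tau>)) = integral {0..h} (\<lambda>\<tau>. (1/b) * (\<phi> k \<tau> * exp (p*\<tau>)))"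
      by (rule integral_cong) (simp add: Fv b_def)
    then show ?thesis unfolding T1_def h_def[symmetric] E_def[symmetric] U_def ic by simp
  qed
  show "i \<noteq> k \<Longrightarrow> i \<noteq> k+1 \<Longrightarrow> Tk k i j = 0" "i \<noteq> k \<Longrightarrow> i \<noteq> k+1 \<Longrightarrow> Tk k j i = 0"
    "i \<noteq> k \<Longrightarrow> i \<noteq> k+1 \<Longrightarrow> T1 k i = 0"
    unfolding Tk_def T1_def by (simp_all add: Fv)
  show "0 < P" unfolding P_def
    by (rule intpos[of _ _ h]) (use c2 pk hpos in \<open>auto intro!: continuous_intros simp: b_def\<close>)
  show "0 < Q" unfolding Q_def
    by (rule intpos[of _ _ 0]) (use c1 pk hpos a0 in \<open>auto intro!: continuous_intros simp: a_def\<close>)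
  show "X \<le> 0"
  proof -
    have "0 \<le> integral {0..h} (\<lambda>\<tau>. - (\<phi> k (\<tau> - h) * \<phi> k \<tau> * exp (p*\<tau>)))"
      by (rule integral_nonneg) (use c1 c2 pk in \<open>auto intro!: integrable_continuous_interval continuous_intros
          simp: mult_nonpos_nonneg\<close>)
    then show ?thesis unfolding X_def by simp
  qed
  show "0 \<le> Tk k j j"
    unfolding Tk_def h_def[symmetric]
    by (intro mult_nonneg_nonneg integral_nonneg)
       (use F_cont[OF k, folded h_def] F_nonneg[OF k, folded h_def] in \<open>auto intro!: integrable_continuous_interval continuous_intros\<close>)
qed

end

lemma arB: fixes a b Q X E c :: real
  assumes "a < 0" "0 < b" "0 < Q" "X \<le> 0" "0 < E" "a / b * (X / Q) \<le> c"
  shows "\<bar>E * (X / (a*b))\<bar> \<le> c * (E * (Q / a^2))"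
proof -
  have nn: "0 \<le> X / (a*b)" using assms by (intro divide_nonpos_neg) (auto simp: mult_neg_pos)
  have eq: "X / (a*b) = (a / b * (X / Q)) * (Q / a^2)" using assms by (simp add: field_simps power2_eq_square)
  have "X / (a*b) \<le> c * (Q / a^2)" unfolding eq using assms by (intro mult_right_mono) auto
  then have "E * (X / (a*b)) \<le> E * (c * (Q / a^2))" using assms by (intro mult_left_mono) auto
  moreover have "\<bar>E * (X / (a*b))\<bar> = E * (X / (a*b))" using nn assms by (intro abs_of_nonneg mult_nonneg_nonneg) auto
  moreover have "E * (c * (Q / a^2)) = c * (E * (Q / a^2))" by (simp only: mult_ac)
  ultimately show ?thesis by linarith
qed

lemma arA: fixes a b P X E c :: real
  assumes "a < 0" "0 < b" "0 < P" "X \<le> 0" "0 < E" "b / a * (X / P) \<le> c"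
  shows "\<bar>E * (X / (a*b))\<bar> \<le> c * (E * (P / b^2))"
proof -
  have nn: "0 \<le> X / (a*b)" using assms by (intro divide_nonpos_neg) (auto simp: mult_neg_pos)
  have eq: "X / (a*b) = (b / a * (X / P)) * (P / b^2)" using assms by (simp add: field_simps power2_eq_square)
  have "X / (a*b) \<le> c * (P / b^2)" unfolding eq using assms by (intro mult_right_mono) auto
  then have "E * (X / (a*b)) \<le> E * (c * (P / b^2))" using assms by (intro mult_left_mono) auto
  moreover have "\<bar>E * (X / (a*b))\<bar> = E * (X / (a*b))" using nn assms by (intro abs_of_nonneg mult_nonneg_nonneg) auto
  moreover have "E * (c * (P / b^2)) = c * (E * (P / b^2))" by (simp only: mult_ac)
  ultimately show ?thesis by linarith
qed

lemma arC: fixes b P U E M :: real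
  assumes "0 < b" "0 < P" "0 < E" "b * (U / P) \<le> M"
  shows "E * (U / b) \<le> M * (E * (P / b^2))"
proof -
  have eq: "U / b = (b * (U / P)) * (P / b^2)" using assms by (simp add: field_simps power2_eq_square)
  have "U / b \<le> M * (P / b^2)" unfolding eq using assms by (intro mult_right_mono) auto
  then have "E * (U / b) \<le> E * (M * (P / b^2))" using assms by (intro mult_left_mono) auto
  moreover have "E * (M * (P / b^2)) = M * (E * (P / b^2))" by (simp only: mult_ac)
  ultimately show ?thesis by linarith
qed

lemma arD: fixes a Q V E M :: real
  assumes "a < 0" "0 < Q" "0 < E" "a * (V / Q) \<le> M"
  shows "E * (V / a) \<le> M * (E * (Q / a^2))"
proof -
  have eq: "V / a = (a * (V / Q)) * (Q / a^2)" using assms by (simp add: field_simps power2_eq_square)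
  have "V / a \<le> M * (Q / a^2)" unfolding eq using assms by (intro mult_right_mono) auto
  then have "E * (V / a) \<le> E * (M * (Q / a^2))" using assms by (intro mult_left_mono) auto
  moreover have "E * (M * (Q / a^2)) = M * (E * (Q / a^2))" by (simp only: mult_ac)
  ultimately show ?thesis by linarith
qed

locale hs2 = hs +
  fixes c M :: real
  assumes c0: "0 < c" and c1: "c < 1"
    and AB: "\<forall>k\<in>{1..n-1}. Aphi p (\<phi> k) (t (k+1) - t k) \<le> c \<and> Bphi p (\<phi> k) (t (k+1) - t k) \<le> c"
    and CD: "\<forall>k\<in>{1..n-1}. Cphi p (\<phi> k) (t (k+1) - t k) \<le> M \<and> Dphi p (\<phi> k) (t (k+1) - t k) \<le> M"
begin

lemma seg_ineq:
  assumes k: "k \<in> {1..n-1}"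
  shows "(\<Sum>i\<in>{1..n}-{j}. \<bar>Tk k i j\<bar>) \<le> c * Tk k j j" "T1 k j \<le> M * Tk k j j"
proof -
  define h where "h = t (k+1) - t k"
  define E where "E = exp (p * t k)"
  define a where "a = \<phi> k (-h)"
  define b where "b = \<phi> k h"
  define X where "X = integral {0..h} (\<lambda>\<tau>. \<phi> k (\<tau> - h) * \<phi> k \<tau> * exp (p*\<tau>))"
  define P where "P = integral {0..h} (\<lambda>\<tau>. \<phi> k \<tau> ^ 2 * exp (p*\<tau>))"
  define Q where "Q = integral {0..h} (\<lambda>\<tau>. \<phi> k (\<tau> - h) ^ 2 * exp (p*\<tau>))"
  define U where "U = integral {0..h} (\<lambda>\<tau>. \<phi> k \<tau> * exp (p*\<tau>))"
  define V where "V = integral {0..h} (\<lambda>\<tau>. \<phi> k (\<tau> - h) * exp (p*\<tau>))"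
  note sv = segvals[OF k, folded h_def E_def, folded a_def b_def X_def P_def Q_def U_def V_def]
  have ab: "Aphi p (\<phi> k) h \<le> c" "Bphi p (\<phi> k) h \<le> c"
    "Cphi p (\<phi> k) h \<le> M" "Dphi p (\<phi> k) h \<le> M" using AB CD k unfolding h_def by auto
  have A: "b / a * (X / P) \<le> c" using ab(1) unfolding Aphi_def a_def b_def X_def P_def .
  have B: "a / b * (X / Q) \<le> c" using ab(2) unfolding Bphi_def a_def b_def X_def Q_def .
  have C: "b * (U / P) \<le> M" using ab(3) unfolding Cphi_def b_def U_def P_def .
  have D: "a * (V / Q) \<le> M" using ab(4) unfolding Dphi_def a_def V_def Q_def .
  have kn: "k + 1 \<in> {1..n}" "k \<in> {1..n}" using k by auto
  show "(\<Sum>i\<in>{1..n}-{j}. \<bar>Tk k i j\<bar>) \<le> c * Tk k j j"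
  proof -
    consider "j = k" | "j = k+1" | "j \<noteq> k" "j \<noteq> k+1" by blast
    then show ?thesis
    proof cases
      case 1
      have "(\<Sum>i\<in>{1..n}-{j}. \<bar>Tk k i j\<bar>) = (\<Sum>i\<in>{1..n}-{j}. if i = k+1 then \<bar>Tk k (k+1) k\<bar> else 0)"
        by (rule sum.cong) (use 1 sv(7) in auto)
      also have "\<dots> = \<bar>Tk k (k+1) k\<bar>" using kn 1 by simp
      also have "\<dots> \<le> c * Tk k j j" unfolding 1 sv(1) sv(4) by (rule arB) (use sv B in auto)
      finally show ?thesis .
    next
      case 2
      have "(\<Sum>i\<in>{1..n}-{j}. \<bar>Tk k i j\<bar>) = (\<Sum>i\<in>{1..n}-{j}. if i = k then \<bar>Tk k k (k+1)\<bar> else 0)"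
        by (rule sum.cong) (use 2 sv(7) in auto)
      also have "\<dots> = \<bar>Tk k k (k+1)\<bar>" using kn 2 by simp
      also have "\<dots> \<le> c * Tk k j j" unfolding 2 sv(2) sv(3) by (rule arA) (use sv A in auto)
      finally show ?thesis .
    next
      case 3
      then show ?thesis using sv(8)[of j] by simp
    qed
  qed
  show "T1 k j \<le> M * Tk k j j"
  proof -
    consider "j = k" | "j = k+1" | "j \<noteq> k" "j \<noteq> k+1" by blast
    then show ?thesis
    proof cases
      case 1
      show ?thesis unfolding 1 sv(1) sv(5) by (rule arD) (use sv D in auto)
    next
      case 2
      show ?thesis unfolding 2 sv(2) sv(6) by (rule arC) (use sv C in auto)
    next
      case 3
      then show ?thesis using sv(8)[of j] sv(9)[of j] by simp
    qed
  qed
qed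

declare One_nat_def [simp del]

definition S :: "nat \<Rightarrow> nat \<Rightarrow> real" where
  "S i j = ipw p (t 1) (t n) (hat \<phi> t n i) (hat \<phi> t n j)"

lemma dom: assumes j: "j \<in> {1..n}"
  shows "0 < S j j \<and> (\<Sum>i\<in>{1..n}-{j}. \<bar>S i j\<bar>) \<le> c * S j j"
proof
  have "(\<Sum>i\<in>{1..n}-{j}. \<bar>S i j\<bar>) \<le> (\<Sum>i\<in>{1..n}-{j}. \<Sum>k=1..n-1. \<bar>Tk k i j\<bar>)"
  proof (rule sum_mono)
    fix i assume i: "i \<in> {1..n}-{j}"
    have i': "i \<in> {1..n}" using i by auto
    show "\<bar>S i j\<bar> \<le> (\<Sum>k=1..n-1. \<bar>Tk k i j\<bar>)" unfolding S_def sij[OF i' j] by (rule sum_abs)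
  qed
  also have "\<dots> = (\<Sum>k=1..n-1. \<Sum>i\<in>{1..n}-{j}. \<bar>Tk k i j\<bar>)" by (rule sum.swap)
  also have "\<dots> \<le> (\<Sum>k=1..n-1. c * Tk k j j)" by (intro sum_mono seg_ineq(1)) auto
  also have "\<dots> = c * S j j" unfolding S_def sij[OF j j] by (simp only: sum_distrib_left)
  finally show "(\<Sum>i\<in>{1..n}-{j}. \<bar>S i j\<bar>) \<le> c * S j j" .
  define k0 where "k0 = (if j \<le> n - 1 then j else n - 1)"
  have k0: "k0 \<in> {1..n-1}" using j n3 unfolding k0_def by auto
  have pos: "0 < Tk k0 j j"
  proof (cases "j \<le> n - 1")
    case True
    then have "k0 = j" unfolding k0_def by auto
    then show ?thesis using segvals(1,11,13,15)[OF k0] by (simp add: k0_def)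
  next
    case False
    then have jk: "j = k0 + 1" using j n3 unfolding k0_def by auto
    show ?thesis unfolding jk using segvals(2,10,14,15)[OF k0] by simp
  qed
  have "Tk k0 j j \<le> (\<Sum>k=1..n-1. Tk k j j)"
    by (rule member_le_sum) (use k0 segvals(16) in auto)
  then show "0 < S j j" using pos unfolding S_def sij[OF j j] by linarith
qed

lemma hint_le: assumes j: "j \<in> {1..n}"
  shows "integral {t 1..t n} (\<lambda>y. hat \<phi> t n j y * exp (p*y)) \<le> M * S j j"
proof -
  have "integral {t 1..t n} (\<lambda>y. hat \<phi> t n j y * exp (p*y)) = (\<Sum>k=1..n-1. T1 k j)" by (rule hint[OF j])
  also have "\<dots> \<le> (\<Sum>k=1..n-1. M * Tk k j j)" by (intro sum_mono seg_ineq(2)) auto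
  also have "\<dots> = M * S j j" unfolding S_def sij[OF j j] by (simp only: sum_distrib_left)
  finally show ?thesis .
qed

lemma icont: fixes g :: "real \<Rightarrow> real" shows "continuous_on {t 1..t n} g \<Longrightarrow> g integrable_on {t 1..t n}"
  by (rule integrable_continuous_interval)

lemma ic2: "integral A (\<lambda>x. (c'::real) * f x) = c' * integral A f"
  using integral_cmul[of A c' f] by simp

lemma ipw_lin2:
  assumes g: "continuous_on {t 1..t n} g"
  shows "ipw p (t 1) (t n) g (\<lambda>y. \<Sum>j=1..n. b j * hat \<phi> t n j y) = (\<Sum>j=1..n. b j * ipw p (t 1) (t n) g (hat \<phi> t n j))"
proof -
  have "ipw p (t 1) (t n) g (\<lambda>y. \<Sum>j=1..n. b j * hat \<phi> t n j y)
      = integral {t 1..t n} (\<lambda>y. \<Sum>j=1..n. b j * (g y * hat \<phi> t n j y * exp (p*y)))"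
    unfolding ipw_def by (rule integral_cong) (simp add: sum_distrib_left sum_distrib_right mult_ac)
  also have "\<dots> = (\<Sum>j=1..n. integral {t 1..t n} (\<lambda>y. b j * (g y * hat \<phi> t n j y * exp (p*y))))"
    by (rule integral_sum) (auto intro!: icont continuous_intros g hat_cont)
  also have "\<dots> = (\<Sum>j=1..n. b j * ipw p (t 1) (t n) g (hat \<phi> t n j))"
    unfolding ipw_def ic2 ..
  finally show ?thesis .
qed

lemma ipw_lin1:
  assumes f: "continuous_on {t 1..t n} f" and j: "j \<in> {1..n}"
  shows "ipw p (t 1) (t n) (\<lambda>y. f y - (\<Sum>i=1..n. a i * hat \<phi> t n i y)) (hat \<phi> t n j)
       = ipw p (t 1) (t n) f (hat \<phi> t n j) - (\<Sum>i=1..n. a i * S i j)"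
proof -
  have "ipw p (t 1) (t n) (\<lambda>y. f y - (\<Sum>i=1..n. a i * hat \<phi> t n i y)) (hat \<phi> t n j)
      = integral {t 1..t n} (\<lambda>y. f y * hat \<phi> t n j y * exp (p*y) - (\<Sum>i=1..n. a i * (hat \<phi> t n i y * hat \<phi> t n j y * exp (p*y))))"
    unfolding ipw_def by (rule integral_cong) (simp add: sum_distrib_left sum_distrib_right algebra_simps)
  also have "\<dots> = integral {t 1..t n} (\<lambda>y. f y * hat \<phi> t n j y * exp (p*y)) - integral {t 1..t n} (\<lambda>y. \<Sum>i=1..n. a i * (hat \<phi> t n i y * hat \<phi> t n j y * exp (p*y)))"
    by (rule integral_diff) (use j in \<open>auto intro!: icont continuous_intros f hat_cont\<close>)
  also have "integral {t 1..t n} (\<lambda>y. \<Sum>i=1..n. a i * (hat \<phi> t n i y * hat \<phi> t n j y * exp (p*y)))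
      = (\<Sum>i=1..n. integral {t 1..t n} (\<lambda>y. a i * (hat \<phi> t n i y * hat \<phi> t n j y * exp (p*y))))"
    by (rule integral_sum) (use j in \<open>auto intro!: icont continuous_intros hat_cont\<close>)
  also have "\<dots> = (\<Sum>i=1..n. a i * S i j)" unfolding S_def ipw_def ic2 ..
  finally show ?thesis unfolding ipw_def .
qed

lemma orth_iff:
  assumes f: "continuous_on {t 1..t n} f"
  shows "(\<forall>v\<in>Uspan \<phi> t n. ipw p (t 1) (t n) (\<lambda>y. f y - (\<Sum>j=1..n. a j * hat \<phi> t n j y)) v = 0)
     \<longleftrightarrow> (\<forall>j\<in>{1..n}. (\<Sum>i=1..n. a i * S i j) = ipw p (t 1) (t n) f (hat \<phi> t n j))"
proof
  assume h: "\<forall>v\<in>Uspan \<phi> t n. ipw p (t 1) (t n) (\<lambda>y. f y - (\<Sum>j=1..n. a j * hat \<phi> t n j y)) v = 0"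
  show "\<forall>j\<in>{1..n}. (\<Sum>i=1..n. a i * S i j) = ipw p (t 1) (t n) f (hat \<phi> t n j)"
  proof
    fix j assume j: "j \<in> {1..n}"
    have heq: "hat \<phi> t n j = (\<lambda>y. \<Sum>i=1..n. (if i = j then 1 else 0) * hat \<phi> t n i y)"
    proof
      fix y
      have "(\<Sum>i=1..n. (if i = j then 1 else 0) * hat \<phi> t n i y) = (\<Sum>i=1..n. if i = j then hat \<phi> t n i y else 0)"
        by (rule sum.cong) auto
      then show "hat \<phi> t n j y = (\<Sum>i=1..n. (if i = j then 1 else 0) * hat \<phi> t n i y)" using j by simp
    qed
    have "hat \<phi> t n j \<in> Uspan \<phi> t n" unfolding Uspan_def mem_Collect_eq
      by (rule exI[of _ "\<lambda>i. if i = j then 1 else 0"]) (rule heq)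
    then show "(\<Sum>i=1..n. a i * S i j) = ipw p (t 1) (t n) f (hat \<phi> t n j)"
      using h ipw_lin1[OF f j, of a] by auto
  qed
next
  assume h: "\<forall>j\<in>{1..n}. (\<Sum>i=1..n. a i * S i j) = ipw p (t 1) (t n) f (hat \<phi> t n j)"
  show "\<forall>v\<in>Uspan \<phi> t n. ipw p (t 1) (t n) (\<lambda>y. f y - (\<Sum>j=1..n. a j * hat \<phi> t n j y)) v = 0"
  proof
    fix v assume "v \<in> Uspan \<phi> t n"
    then obtain b where v: "v = (\<lambda>y. \<Sum>j=1..n. b j * hat \<phi> t n j y)" unfolding Uspan_def by auto
    have gc: "continuous_on {t 1..t n} (\<lambda>y. f y - (\<Sum>j=1..n. a j * hat \<phi> t n j y))"
      by (auto intro!: continuous_intros f hat_cont)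
    show "ipw p (t 1) (t n) (\<lambda>y. f y - (\<Sum>j=1..n. a j * hat \<phi> t n j y)) v = 0"
      unfolding v ipw_lin2[OF gc] using h ipw_lin1[OF f] by (auto intro!: sum.neutral)
  qed
qed

lemma proj_prop:
  assumes f: "continuous_on {t 1..t n} f"
  shows "\<exists>a. proj p \<phi> t n f = (\<lambda>y. \<Sum>j=1..n. a j * hat \<phi> t n j y)
           \<and> (\<forall>j\<in>{1..n}. (\<Sum>i=1..n. a i * S i j) = ipw p (t 1) (t n) f (hat \<phi> t n j))"
proof -
  have dd: "\<forall>j\<in>{1..n}. 0 < S j j \<and> (\<Sum>i\<in>{1..n}-{j}. \<bar>S i j\<bar>) \<le> c * S j j" using dom by auto
  obtain a0 where a0: "\<forall>j\<in>{1..n}. (\<Sum>i=1..n. a0 i * S i j) = ipw p (t 1) (t n) f (hat \<phi> t n j)"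
    using dd_exists[OF dd, of "\<lambda>j. ipw p (t 1) (t n) f (hat \<phi> t n j)"] c0 c1 by auto
  define u0 where "u0 = (\<lambda>y. \<Sum>j=1..n. a0 j * hat \<phi> t n j y)"
  have "proj p \<phi> t n f = u0"
    unfolding proj_def
  proof (rule the_equality)
    show "u0 \<in> Uspan \<phi> t n \<and> (\<forall>v\<in>Uspan \<phi> t n. ipw p (t 1) (t n) (\<lambda>s. f s - u0 s) v = 0)"
      using orth_iff[OF f, of a0] a0 unfolding u0_def Uspan_def by auto
  next
    fix u assume u: "u \<in> Uspan \<phi> t n \<and> (\<forall>v\<in>Uspan \<phi> t n. ipw p (t 1) (t n) (\<lambda>s. f s - u s) v = 0)"
    then obtain a' where a': "u = (\<lambda>y. \<Sum>j=1..n. a' j * hat \<phi> t n j y)" unfolding Uspan_def by auto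
    have e: "\<forall>j\<in>{1..n}. (\<Sum>i=1..n. a' i * S i j) = ipw p (t 1) (t n) f (hat \<phi> t n j)"
      using u orth_iff[OF f, of a'] unfolding a' by auto
    have e0: "\<forall>j\<in>{1..n}. (\<Sum>i=1..n. (a' i - a0 i) * S i j) = 0"
      using e a0 by (simp add: left_diff_distrib sum_subtractf)
    have "\<bar>a' i - a0 i\<bar> \<le> 0 / (1 - c)" if i: "i \<in> {1..n}" for i
      by (rule dd_bound[OF dd _ _ e0 _ i]) (use c0 c1 in auto)
    then have "\<forall>i\<in>{1..n}. a' i = a0 i" by auto
    then show "u = u0" unfolding a' u0_def by (auto intro!: sum.cong)
  qed
  then show ?thesis using a0 unfolding u0_def by auto
qed

lemma bdd_cont: fixes g :: "real \<Rightarrow> real"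
  shows "continuous_on {a..b} g \<Longrightarrow> bdd_above (g ` {a..b})"
  by (intro bounded_imp_bdd_above compact_imp_bounded compact_continuous_image) auto

lemma proj_bound:
  assumes f: "continuous_on {t 1..t n} f" and fn: "supn (t 1) (t n) f \<noteq> 0"
  shows "supn (t 1) (t n) (proj p \<phi> t n f) / supn (t 1) (t n) f
     \<le> Sup ((\<lambda>y. \<Sum>j=1..n. \<bar>hat \<phi> t n j y\<bar>) ` {t 1..t n}) * (M / (1 - c))"
proof -
  define SH where "SH = Sup ((\<lambda>y. \<Sum>j=1..n. \<bar>hat \<phi> t n j y\<bar>) ` {t 1..t n})"
  define N where "N = supn (t 1) (t n) f"
  have t1n: "t 1 \<le> t n" using tle[of 1 n] n3 by auto
  have bf: "bdd_above ((\<lambda>y. \<bar>f y\<bar>) ` {t 1..t n})" by (rule bdd_cont) (auto intro!: continuous_intros f)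
  have fN: "\<bar>f y\<bar> \<le> N" if "y \<in> {t 1..t n}" for y
    unfolding N_def supn_def by (rule cSup_upper) (use that bf in auto)
  have N0: "0 < N" using fN[of "t 1"] t1n fn N_def by force
  have bH: "bdd_above ((\<lambda>y. \<Sum>j=1..n. \<bar>hat \<phi> t n j y\<bar>) ` {t 1..t n})"
    by (rule bdd_cont) (auto intro!: continuous_intros hat_cont)
  have HS: "(\<Sum>j=1..n. \<bar>hat \<phi> t n j y\<bar>) \<le> SH" if "y \<in> {t 1..t n}" for y
    unfolding SH_def by (rule cSup_upper) (use that bH in auto)
  obtain a where a: "proj p \<phi> t n f = (\<lambda>y. \<Sum>j=1..n. a j * hat \<phi> t n j y)"
    and eq: "\<forall>j\<in>{1..n}. (\<Sum>i=1..n. a i * S i j) = ipw p (t 1) (t n) f (hat \<phi> t n j)"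
    using proj_prop[OF f] by auto
  have bK: "\<forall>j\<in>{1..n}. \<bar>ipw p (t 1) (t n) f (hat \<phi> t n j)\<bar> \<le> (N * M) * S j j"
  proof
    fix j assume j: "j \<in> {1..n}"
    have "\<bar>ipw p (t 1) (t n) f (hat \<phi> t n j)\<bar> \<le> integral {t 1..t n} (\<lambda>y. N * (hat \<phi> t n j y * exp (p*y)))"
      unfolding ipw_def real_norm_def[symmetric]
    proof (rule integral_norm_bound_integral)
      show "(\<lambda>y. f y * hat \<phi> t n j y * exp (p * y)) integrable_on {t 1..t n}"
        using j by (auto intro!: icont continuous_intros f hat_cont)
      show "(\<lambda>y. N * (hat \<phi> t n j y * exp (p * y))) integrable_on {t 1..t n}"
        using j by (auto intro!: icont continuous_intros f hat_cont)
      fix y assume y: "y \<in> {t 1..t n}"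
      have "0 \<le> hat \<phi> t n j y" using hat_nonneg[OF j] y by auto
      then have "\<bar>f y\<bar> * (hat \<phi> t n j y * exp (p * y)) \<le> N * (hat \<phi> t n j y * exp (p * y))"
        using fN[OF y] by (intro mult_right_mono) auto
      then show "norm (f y * hat \<phi> t n j y * exp (p * y)) \<le> N * (hat \<phi> t n j y * exp (p * y))"
        using \<open>0 \<le> hat \<phi> t n j y\<close> by (simp add: abs_mult mult.assoc)
    qed
    also have "\<dots> = N * integral {t 1..t n} (\<lambda>y. hat \<phi> t n j y * exp (p*y))" by (rule ic2)
    also have "\<dots> \<le> N * (M * S j j)" using hint_le[OF j] N0 by (intro mult_left_mono) auto
    finally show "\<bar>ipw p (t 1) (t n) f (hat \<phi> t n j)\<bar> \<le> (N * M) * S j j" by (simp add: mult.assoc)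
  qed
  have dd: "\<forall>j\<in>{1..n}. 0 < S j j \<and> (\<Sum>i\<in>{1..n}-{j}. \<bar>S i j\<bar>) \<le> c * S j j" using dom by auto
  define R where "R = N * M / (1 - c)"
  have aR: "\<bar>a j\<bar> \<le> R" if j: "j \<in> {1..n}" for j
    unfolding R_def by (rule dd_bound[OF dd _ _ eq bK j]) (use c0 c1 in auto)
  have R0: "0 \<le> R" using aR[of 1] n3 by force
  have pt: "\<bar>proj p \<phi> t n f y\<bar> \<le> R * SH" if y: "y \<in> {t 1..t n}" for y
  proof -
    have "\<bar>proj p \<phi> t n f y\<bar> \<le> (\<Sum>j=1..n. \<bar>a j\<bar> * \<bar>hat \<phi> t n j y\<bar>)"
      unfolding a by (rule order_trans[OF sum_abs]) (simp add: abs_mult)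
    also have "\<dots> \<le> (\<Sum>j=1..n. R * \<bar>hat \<phi> t n j y\<bar>)" by (intro sum_mono mult_right_mono aR) auto
    also have "\<dots> = R * (\<Sum>j=1..n. \<bar>hat \<phi> t n j y\<bar>)" by (simp add: sum_distrib_left)
    also have "\<dots> \<le> R * SH" using HS[OF y] R0 by (intro mult_left_mono)
    finally show ?thesis .
  qed
  have "supn (t 1) (t n) (proj p \<phi> t n f) \<le> R * SH"
    unfolding supn_def by (rule cSup_least) (use t1n pt in auto)
  then have "supn (t 1) (t n) (proj p \<phi> t n f) / N \<le> R * SH / N" using N0 by (intro divide_right_mono) auto
  also have "R * SH / N = SH * (M / (1 - c))" unfolding R_def using N0 c1 by (simp add: field_simps)
  finally show ?thesis unfolding SH_def N_def .
qed

lemma final: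
  shows "row_dd (\<lambda>i j. ipw p (t 1) (t n) (hat \<phi> t n i) (hat \<phi> t n j)) n c
       \<and> bdd_above (proj_ratios p \<phi> t n)
       \<and> proj_opnorm p \<phi> t n \<le> Sup ((\<lambda>s. \<Sum>j=1..n. \<bar>hat \<phi> t n j s\<bar>) ` {t 1..t n}) * (M / (1 - c))"
proof (intro conjI)
  have le: "r \<le> Sup ((\<lambda>s. \<Sum>j=1..n. \<bar>hat \<phi> t n j s\<bar>) ` {t 1..t n}) * (M / (1 - c))"
    if "r \<in> proj_ratios p \<phi> t n" for r
    using that proj_bound unfolding proj_ratios_def by auto
  show "bdd_above (proj_ratios p \<phi> t n)" by (rule bdd_aboveI[OF le])
  have t1n: "t 1 \<le> t n" using tle[of 1 n] n3 by auto
  have "supn (t 1) (t n) (\<lambda>s. 1) = 1" unfolding supn_def using t1n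
    by (simp add: image_constant_conv)
  then have "supn (t 1) (t n) (proj p \<phi> t n (\<lambda>s. 1)) / supn (t 1) (t n) (\<lambda>s. 1) \<in> proj_ratios p \<phi> t n"
    unfolding proj_ratios_def by (auto intro!: exI[of _ "\<lambda>s. 1"])
  then have ne: "proj_ratios p \<phi> t n \<noteq> {}" by auto
  show "proj_opnorm p \<phi> t n \<le> Sup ((\<lambda>s. \<Sum>j=1..n. \<bar>hat \<phi> t n j s\<bar>) ` {t 1..t n}) * (M / (1 - c))"
    unfolding proj_opnorm_def by (rule cSup_least[OF ne le])
  show "row_dd (\<lambda>i j. ipw p (t 1) (t n) (hat \<phi> t n i) (hat \<phi> t n j)) n c"
    unfolding row_dd_def S_def[symmetric]
  proof
    fix j assume j: "j \<in> {1..n}"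
    have sym: "S i k = S k i" for i k unfolding S_def ipw_def by (simp add: mult_ac)
    have nn: "\<forall>i\<in>{1..n}-{j}. 0 \<le> \<bar>S i j\<bar>" by auto
    have "(if j = 1 then 0 else \<bar>S (j-1) j\<bar>) + (if j = n then 0 else \<bar>S j (j+1)\<bar>)
        = (\<Sum>i\<in>({1..n}-{j}) \<inter> {j-1, j+1}. \<bar>S i j\<bar>)"
    proof -
      consider "j = 1" | "j = n" | "j \<noteq> 1" "j \<noteq> n" by blast
      then show ?thesis
      proof cases
        case 1
        then have "({1..n}-{j}) \<inter> {j-1, j+1} = {2}" using n3 by auto
        then show ?thesis using 1 n3 sym by simp
      next
        case 2
        then have "({1..n}-{j}) \<inter> {j-1, j+1} = {n-1}" using n3 by auto
        then show ?thesis using 2 n3 by simp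
      next
        case 3
        then have "({1..n}-{j}) \<inter> {j-1, j+1} = {j-1, j+1}" using j by auto
        then show ?thesis using 3 j sym by simp
      qed
    qed
    also have "\<dots> \<le> (\<Sum>i\<in>{1..n}-{j}. \<bar>S i j\<bar>)" by (rule sum_mono2) auto
    also have "\<dots> \<le> c * \<bar>S j j\<bar>" using dom[OF j] by auto
    finally show "(if j = 1 then 0 else \<bar>S (j-1) j\<bar>) + (if j = n then 0 else \<bar>S j (j+1)\<bar>) \<le> c * \<bar>S j j\<bar>" .
  qed
qed

end

declare One_nat_def [simp]

theorem mainTheorem13:
  fixes \<delta> p c :: real and n :: nat and \<phi> :: "nat \<Rightarrow> real \<Rightarrow> real" and t :: "nat \<Rightarrow> real"
  assumes "\<delta> > 0" and "n \<ge> 3"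
    and "\<forall>j\<in>{1..n-1}. continuous_on {-\<delta>..\<delta>} (\<phi> j) \<and> strict_mono_on {-\<delta>..\<delta>} (\<phi> j) \<and> \<phi> j 0 = 0"
    and "\<forall>j\<in>{1..n-1}. t j < t (j+1)"
    and "\<forall>j\<in>{1..n-1}. t (j+1) - t j \<le> \<delta>"
    and "0 < c" and "c < 1"
    and "Max ((\<lambda>j. max (Aphi p (\<phi> j) (t (j+1) - t j)) (Bphi p (\<phi> j) (t (j+1) - t j))) ` {1..n-1}) \<le> c"
  shows "row_dd (\<lambda>i j. ipw p (t 1) (t n) (hat \<phi> t n i) (hat \<phi> t n j)) n c
       \<and> bdd_above (proj_ratios p \<phi> t n)
       \<and> proj_opnorm p \<phi> t n \<le>
           Sup ((\<lambda>s. \<Sum>j=1..n. \<bar>hat \<phi> t n j s\<bar>) ` {t 1..t n}) *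
           (Max ((\<lambda>j. max (Cphi p (\<phi> j) (t (j+1) - t j)) (Dphi p (\<phi> j) (t (j+1) - t j))) ` {1..n-1}) / (1 - c))"
proof -
  define M where "M = Max ((\<lambda>j. max (Cphi p (\<phi> j) (t (j+1) - t j)) (Dphi p (\<phi> j) (t (j+1) - t j))) ` {1..n-1})"
  have AB: "\<forall>k\<in>{1..n-1}. Aphi p (\<phi> k) (t (k+1) - t k) \<le> c \<and> Bphi p (\<phi> k) (t (k+1) - t k) \<le> c"
  proof
    fix k assume k: "k \<in> {1..n-1}"
    have "max (Aphi p (\<phi> k) (t (k+1) - t k)) (Bphi p (\<phi> k) (t (k+1) - t k))
       \<le> Max ((\<lambda>j. max (Aphi p (\<phi> j) (t (j+1) - t j)) (Bphi p (\<phi> j) (t (j+1) - t j))) ` {1..n-1})"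
      by (rule Max_ge) (use k in auto)
    then show "Aphi p (\<phi> k) (t (k+1) - t k) \<le> c \<and> Bphi p (\<phi> k) (t (k+1) - t k) \<le> c"
      using assms(8) by linarith
  qed
  have CD: "\<forall>k\<in>{1..n-1}. Cphi p (\<phi> k) (t (k+1) - t k) \<le> M \<and> Dphi p (\<phi> k) (t (k+1) - t k) \<le> M"
  proof
    fix k assume k: "k \<in> {1..n-1}"
    have "max (Cphi p (\<phi> k) (t (k+1) - t k)) (Dphi p (\<phi> k) (t (k+1) - t k)) \<le> M"
      unfolding M_def by (rule Max_ge) (use k in auto)
    then show "Cphi p (\<phi> k) (t (k+1) - t k) \<le> M \<and> Dphi p (\<phi> k) (t (k+1) - t k) \<le> M"
      by linarith
  qed
  interpret hs2 \<delta> p n \<phi> t c M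
    by unfold_locales (use assms AB CD in auto)
  show ?thesis using final unfolding M_def .
qed

end
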